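(* Let $\{z_n\}_{n\ge 0}$ be a sequence of positive real numbers satisfying $$(\alpha_1n+\alpha_0)z_{n+1}=(\beta_1n+\beta_0)z_n-(\gamma_1n+\gamma_0)z_{n-1}\quad (n\ge 1),$$ where $\alpha_1n+\alpha_0$, $\beta_1n+\beta_0$, $\gamma_1n+\gamma_0$ are positive for all $n\ge 1$. Put $A=\beta_0\gamma_1-\beta_1\gamma_0$, $B=\gamma_0\alpha_1-\gamma_1\alpha_0$, $C=\alpha_0\beta_1-\alpha_1\beta_0$. Suppose $z_0z_2\ge z_1^2$. Then $\{z_n\}_{n\ge 0}$ is log-convex if one of the following holds: (i) $B\ge 0$ and $C\ge 0$; (ii) $B<0$, $C>0$, $AC\ge B^2$ and $z_0B+z_1C\ge 0$; (iii) $B>0$, $C<0$, $AC\le B^2$ and $z_0B+z_1C\ge 0$.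
   Context: A sequence $a_0,a_1,\ldots$ of nonnegative real numbers is log-convex if $a_{k-1}a_{k+1}\ge a_k^2$ for all $k\ge 1$. *)

theory Defs
  imports Complex_Main
begin

definition log_convex :: "(nat \<Rightarrow> real) \<Rightarrow> bool" where
  "log_convex a \<longleftrightarrow> (\<forall>k. a k \<ge> 0) \<and> (\<forall>k\<ge>1. a (k - 1) * a (k + 1) \<ge> (a k)\<^sup>2)"

end

theory Submission
  imports Defs
begin

lemma key_id:
  fixes am an bm bn cm cn u v w t B C m ap aq bp bq cp cq :: real
  assumes e1: "an * t = bn * w - cn * v" and e2: "cm * u = bm * v - am * w"
    and "am = ap*m+aq" "an = ap*(m+1)+aq" "bm = bp*m+bq" "bn = bp*(m+1)+bq"
    "cm = cp*m+cq" "cn = cp*(m+1)+cq"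
    and "B = cq*ap - cp*aq" and "C = aq*bp - ap*bq"
  shows "am*an*(v*t-w^2) = an*cm*(u*w-v^2) + v*(C*w+B*v)"
proof -
  have 1: "am*an*(v*t-w^2) = am*v*(an*t) - am*an*w^2" by (simp add: algebra_simps power2_eq_square)
  have 2: "an*cm*(u*w-v^2) = an*w*(cm*u) - an*cm*v^2" by (simp add: algebra_simps power2_eq_square)
  have 3: "am*v*(bn * w - cn * v) - am*an*w^2 = (an*w*(bm * v - am * w) - an*cm*v^2) + v*(C*w+B*v)"
    unfolding assms(3-) by (simp add: algebra_simps power2_eq_square)
  show ?thesis unfolding 1 2 e1 e2 using 3 .
qed

theorem theorem3p10:
  fixes z :: "nat \<Rightarrow> real"
    and \<alpha>\<^sub>1 \<alpha>\<^sub>0 \<beta>\<^sub>1 \<beta>\<^sub>0 \<gamma>\<^sub>1 \<gamma>\<^sub>0 A B C :: real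
  assumes zpos: "\<And>n. z n > 0"
    and rec: "\<And>n. n \<ge> 1 \<Longrightarrow>
      (\<alpha>\<^sub>1 * real n + \<alpha>\<^sub>0) * z (n + 1) =
        (\<beta>\<^sub>1 * real n + \<beta>\<^sub>0) * z n - (\<gamma>\<^sub>1 * real n + \<gamma>\<^sub>0) * z (n - 1)"
    and apos: "\<And>n. n \<ge> 1 \<Longrightarrow> \<alpha>\<^sub>1 * real n + \<alpha>\<^sub>0 > 0"
    and bpos: "\<And>n. n \<ge> 1 \<Longrightarrow> \<beta>\<^sub>1 * real n + \<beta>\<^sub>0 > 0"
    and cpos: "\<And>n. n \<ge> 1 \<Longrightarrow> \<gamma>\<^sub>1 * real n + \<gamma>\<^sub>0 > 0"
    and A_def: "A = \<beta>\<^sub>0 * \<gamma>\<^sub>1 - \<beta>\<^sub>1 * \<gamma>\<^sub>0"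
    and B_def: "B = \<gamma>\<^sub>0 * \<alpha>\<^sub>1 - \<gamma>\<^sub>1 * \<alpha>\<^sub>0"
    and C_def: "C = \<alpha>\<^sub>0 * \<beta>\<^sub>1 - \<alpha>\<^sub>1 * \<beta>\<^sub>0"
    and init: "z 0 * z 2 \<ge> (z 1)\<^sup>2"
    and cases: "(B \<ge> 0 \<and> C \<ge> 0)
      \<or> (B < 0 \<and> C > 0 \<and> A * C \<ge> B\<^sup>2 \<and> z 0 * B + z 1 * C \<ge> 0)
      \<or> (B > 0 \<and> C < 0 \<and> A * C \<le> B\<^sup>2 \<and> z 0 * B + z 1 * C \<ge> 0)"
  shows "log_convex z"
proof -
  define a where "a n = \<alpha>\<^sub>1 * real n + \<alpha>\<^sub>0" for n
  define b where "b n = \<beta>\<^sub>1 * real n + \<beta>\<^sub>0" for n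
  define c where "c n = \<gamma>\<^sub>1 * real n + \<gamma>\<^sub>0" for n
  have ABC: "A * a n + B * b n + C * c n = 0" for n
    unfolding a_def b_def c_def A_def B_def C_def by (simp add: algebra_simps)
  have step_inv: "C * z (n+1) + B * z n \<ge> 0"
    if n1: "n \<ge> 1" and D: "z (n-1) * z (n+1) \<ge> (z n)^2" and I: "C * z n + B * z (n-1) \<ge> 0" for n
  proof -
    have r: "a n * z (n+1) = b n * z n - c n * z (n-1)" using rec[OF n1] unfolding a_def b_def c_def .
    have an: "a n > 0" using apos[OF n1] unfolding a_def .
    have cn: "c n > 0" using cpos[OF n1] unfolding c_def .
    have zp: "z (n-1) > 0" "z n > 0" "z (n+1) > 0" using zpos by auto
    consider "B \<ge> 0 \<and> C \<ge> 0" | "C > 0" | "B > 0 \<and> C < 0 \<and> A * C \<le> B\<^sup>2" using cases by linarith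
    then show ?thesis
    proof cases
      case 1 then show ?thesis using zp by simp
    next
      case 2
      have "0 \<le> z n * (C * z n + B * z (n-1))" using zp I by simp
      also have "\<dots> = C * (z n)^2 + B * z (n-1) * z n"
        by (simp add: algebra_simps power2_eq_square)
      also have "\<dots> \<le> C * (z (n-1) * z (n+1)) + B * z (n-1) * z n"
        using D 2 by (simp add: mult_left_mono)
      also have "\<dots> = z (n-1) * (C * z (n+1) + B * z n)"
        by (simp add: algebra_simps)
      finally have "z (n-1) * (C * z (n+1) + B * z n) \<ge> 0" .
      then show ?thesis using zp by (simp add: zero_le_mult_iff)
    next
      case 3
      have "0 \<le> z n * a n * (B^2 - A * C)" using zp an 3 by simp
      also have "\<dots> = z n * (- A * C * a n + B^2 * a n)"
        by (simp add: algebra_simps)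
      also have "- A * C * a n = C * (B * b n + C * c n)"
      proof -
        have "B * b n + C * c n = - A * a n" using ABC[of n] by linarith
        then show ?thesis by simp
      qed
      also have "z n * (C * (B * b n + C * c n) + B^2 * a n) =
          B*C*b n * z n + (-C) * c n * (- C * z n) + B^2 * a n * z n"
        by (simp add: algebra_simps power2_eq_square)
      also have "\<dots> \<le> B*C*b n * z n + (-C) * c n * (B * z (n-1)) + B^2 * a n * z n"
      proof -
        have "B * z (n-1) \<ge> - C * z n" using I by linarith
        moreover have "(-C) * c n \<ge> 0" using 3 cn by (simp add: mult_nonpos_nonneg)
        ultimately have "(-C) * c n * (- C * z n) \<le> (-C) * c n * (B * z (n-1))"
          by (rule mult_left_mono)
        then show ?thesis by linarith
      qed
      also have "\<dots> = B * a n * (C * z (n+1) + B * z n)"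
      proof -
        have bz: "b n * z n = a n * z (n+1) + c n * z (n-1)" using r by linarith
        have "B*C*b n * z n = B*C*(a n * z (n+1) + c n * z (n-1))"
          using bz by (simp add: mult.assoc)
        then show ?thesis by (simp add: algebra_simps power2_eq_square)
      qed
      finally have "B * a n * (C * z (n+1) + B * z n) \<ge> 0" .
      moreover have "B * a n > 0" using 3 an by simp
      ultimately show ?thesis by (simp add: zero_le_mult_iff)
    qed
  qed
  have step_D: "z n * z (n+2) \<ge> (z (n+1))^2"
    if n1: "n \<ge> 1" and D: "z (n-1) * z (n+1) \<ge> (z n)^2" and I: "C * z (n+1) + B * z n \<ge> 0" for n
  proof -
    have n2: "n + 1 \<ge> 1" by simp
    have e1: "a (n+1) * z (n+2) = b (n+1) * z (n+1) - c (n+1) * z n"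
      using rec[OF n2] unfolding a_def b_def c_def by (simp add: numeral_2_eq_2)
    have e2: "c n * z (n-1) = b n * z n - a n * z (n+1)"
      using rec[OF n1] unfolding a_def b_def c_def by (simp add: algebra_simps)
    have k: "a n * a (n+1) * (z n * z (n+2) - (z (n+1))^2) = a (n+1) * c n * (z (n-1) * z (n+1) - (z n)^2) + z n * (C * z (n+1) + B * z n)"
      by (rule key_id[OF e1 e2, where m="real n" and ap=\<alpha>\<^sub>1 and aq=\<alpha>\<^sub>0 and bp=\<beta>\<^sub>1 and bq=\<beta>\<^sub>0 and cp=\<gamma>\<^sub>1 and cq=\<gamma>\<^sub>0])
        (auto simp: a_def b_def c_def B_def C_def)
    have an: "a n > 0" "a (n+1) > 0" using apos[OF n1] apos[OF n2] unfolding a_def by auto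
    have cn: "c n > 0" using cpos[OF n1] unfolding c_def .
    have "a (n+1) * c n * (z (n-1) * z (n+1) - (z n)^2) \<ge> 0" using an cn D by simp
    moreover have "z n * (C * z (n+1) + B * z n) \<ge> 0" using zpos[of n] I by simp
    ultimately have "a n * a (n+1) * (z n * z (n+2) - (z (n+1))^2) \<ge> 0" using k by linarith
    moreover have "a n * a (n+1) > 0" using an by simp
    ultimately show ?thesis by (simp add: zero_le_mult_iff)
  qed
  have main: "z (n-1) * z (n+1) \<ge> (z n)^2 \<and> C * z n + B * z (n-1) \<ge> 0" if "n \<ge> 1" for n
    using that
  proof (induction n rule: dec_induct)
    case base
    have "C * z 1 + B * z 0 \<ge> 0"
      using cases zpos[of 0] zpos[of 1] by (auto simp: algebra_simps)
    then show ?case using init by (simp add: numeral_2_eq_2)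
  next
    case (step n)
    have I: "C * z (n+1) + B * z n \<ge> 0" using step_inv[OF step(1)] step(3) by simp
    have "z n * z (n+2) \<ge> (z (n+1))^2" using step_D[OF step(1)] step(3) I by simp
    then show ?case using I by (simp add: numeral_2_eq_2)
  qed
  show ?thesis unfolding log_convex_def
    using main zpos by (auto intro: less_imp_le)
qed

end
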